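(* Let $f,g\colon M^n\to\mathbb{R}^N$ be immersions with $g_*=f_*\circ e^{\varphi}T$, where $\varphi\in C^\infty(M)$ and $T$ is a $(1,1)$-tensor orthogonal with respect to the metric $\langle\,,\rangle$ induced by $f$. Extend $T$, $\langle\,,\rangle$ and the second fundamental form $\alpha_f$ of $f$ complex (bi)linearly to $TM\otimes\mathbb{C}$, and for an eigenvalue $\lambda$ of $T$ let $E_\lambda=\ker(T-\lambda I)\subset TM\otimes\mathbb{C}$. Then for eigenvalues $\lambda,\mu$: (i) $\langle E_\lambda,E_\mu\rangle=0$ unless $\mu=\bar\lambda=1/\lambda$; (ii) $\alpha_f(E_\lambda,E_\mu)=0$ unless $\mu=\lambda$. *)

theory Defs
  imports "HOL-Analysis.Analysis"
begin

text \<open>Local (coordinate) model: the manifold M^n is an open set U in real^'n.\<close>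

abbreviation Dif :: "('a::real_normed_vector \<Rightarrow> 'b::real_normed_vector) \<Rightarrow> 'a \<Rightarrow> 'a \<Rightarrow> 'b" where
  "Dif f x \<equiv> frechet_derivative f (at x)"

fun iter_dd :: "('a::real_normed_vector \<Rightarrow> 'b::real_normed_vector) \<Rightarrow> 'a list \<Rightarrow> 'a \<Rightarrow> 'b" where
  "iter_dd f [] = f"
| "iter_dd f (v # vs) = (\<lambda>x. Dif (iter_dd f vs) x v)"

definition smooth_on :: "'a::real_normed_vector set \<Rightarrow> ('a \<Rightarrow> 'b::real_normed_vector) \<Rightarrow> bool" where
  "smooth_on U f \<longleftrightarrow> (\<forall>vs. \<forall>x\<in>U. iter_dd f vs differentiable (at x))"

definition immersion_on :: "(real^'n \<Rightarrow> real^'m) \<Rightarrow> (real^'n) set \<Rightarrow> bool" where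
  "immersion_on f U \<longleftrightarrow> open U \<and> smooth_on U f \<and> (\<forall>x\<in>U. inj (Dif f x))"

definition metric :: "(real^'n \<Rightarrow> real^'m) \<Rightarrow> real^'n \<Rightarrow> real^'n \<Rightarrow> real^'n \<Rightarrow> real" where
  "metric f x u v = Dif f x u \<bullet> Dif f x v"

definition D2 :: "(real^'n \<Rightarrow> real^'m) \<Rightarrow> real^'n \<Rightarrow> real^'n \<Rightarrow> real^'n \<Rightarrow> real^'m" where
  "D2 f x u v = Dif (\<lambda>y. Dif f y v) x u"

definition nproj :: "(real^'m) set \<Rightarrow> real^'m \<Rightarrow> real^'m" where
  "nproj S w = w - (THE p. p \<in> S \<and> (\<forall>s\<in>S. (w - p) \<bullet> s = 0))"

definition sff :: "(real^'n \<Rightarrow> real^'m) \<Rightarrow> real^'n \<Rightarrow> real^'n \<Rightarrow> real^'n \<Rightarrow> real^'m" where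
  "sff f x u v = nproj (range (Dif f x)) (D2 f x u v)"

definition cmetric :: "(real^'n \<Rightarrow> real^'m) \<Rightarrow> real^'n \<Rightarrow> complex^'n \<Rightarrow> complex^'n \<Rightarrow> complex" where
  "cmetric f x v w = (\<Sum>i\<in>UNIV. \<Sum>j\<in>UNIV. v$i * w$j * complex_of_real (metric f x (axis i 1) (axis j 1)))"

definition csff :: "(real^'n \<Rightarrow> real^'m) \<Rightarrow> real^'n \<Rightarrow> complex^'n \<Rightarrow> complex^'n \<Rightarrow> complex^'m" where
  "csff f x v w = (\<chi> k. \<Sum>i\<in>UNIV. \<Sum>j\<in>UNIV. v$i * w$j * complex_of_real (sff f x (axis i 1) (axis j 1) $ k))"

definition cmat :: "real^'n^'n \<Rightarrow> complex^'n^'n" where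
  "cmat A = (\<chi> i j. complex_of_real (A$i$j))"

definition eigenspace_c :: "real^'n^'n \<Rightarrow> complex \<Rightarrow> (complex^'n) set" where
  "eigenspace_c A l = {v. cmat A *v v = (\<chi> i. l * v$i)}"

end

theory Submission
  imports Defs "HOL-Analysis.Analysis"
begin

lemma vec_expand: "(x::real^'n) = (\<Sum>i\<in>UNIV. x$i *\<^sub>R axis i 1)"
  using basis_expansion[of x] by (simp add: scalar_mult_eq_scaleR)

lemma lin_expand:
  assumes "linear L" shows "L (x::real^'n) = (\<Sum>i\<in>UNIV. x$i *\<^sub>R L (axis i 1))"
proof -
  have "L x = L (\<Sum>i\<in>UNIV. x$i *\<^sub>R axis i 1)" by (rule arg_cong[where f=L], rule vec_expand)
  also have "\<dots> = (\<Sum>i\<in>UNIV. x$i *\<^sub>R L (axis i 1))"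
    by (simp add: linear_sum[OF assms] linear_scale[OF assms])
  finally show ?thesis .
qed

lemma bil_expand:
  fixes b :: "real^'n \<Rightarrow> real^'n \<Rightarrow> real"
  assumes "bilinear b"
  shows "b x y = (\<Sum>i\<in>UNIV. \<Sum>j\<in>UNIV. x$i * y$j * b (axis i 1) (axis j 1))"
proof -
  have l1: "linear (\<lambda>x. b x z)" for z using assms by (simp add: bilinear_def)
  have l2: "linear (b z)" for z using assms by (simp add: bilinear_def)
  have "b x y = (\<Sum>i\<in>UNIV. x$i *\<^sub>R b (axis i 1) y)" using lin_expand[OF l1[of y], of x] by simp
  also have "\<dots> = (\<Sum>i\<in>UNIV. x$i * (\<Sum>j\<in>UNIV. y$j * b (axis i 1) (axis j 1)))"
  proof (rule sum.cong[OF refl])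
    fix i
    show "x$i *\<^sub>R b (axis i 1) y = x$i * (\<Sum>j\<in>UNIV. y$j * b (axis i 1) (axis j 1))"
      using lin_expand[OF l2[of "axis i 1"], of y] by simp
  qed
  finally show ?thesis by (simp add: sum_distrib_left mult.assoc)
qed

lemma sum4_swap:
  "(\<Sum>i\<in>I. \<Sum>j\<in>J. \<Sum>a\<in>K. \<Sum>c\<in>L. F i j a c) = (\<Sum>a\<in>K. \<Sum>c\<in>L. \<Sum>i\<in>I. \<Sum>j\<in>J. F i j a c)"
proof -
  have "(\<Sum>i\<in>I. \<Sum>j\<in>J. \<Sum>a\<in>K. \<Sum>c\<in>L. F i j a c) = (\<Sum>i\<in>I. \<Sum>a\<in>K. \<Sum>j\<in>J. \<Sum>c\<in>L. F i j a c)"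
    by (rule sum.cong[OF refl], rule sum.swap)
  also have "\<dots> = (\<Sum>a\<in>K. \<Sum>i\<in>I. \<Sum>j\<in>J. \<Sum>c\<in>L. F i j a c)" by (rule sum.swap)
  also have "\<dots> = (\<Sum>a\<in>K. \<Sum>i\<in>I. \<Sum>c\<in>L. \<Sum>j\<in>J. F i j a c)"
    by (rule sum.cong[OF refl], rule sum.cong[OF refl], rule sum.swap)
  also have "\<dots> = (\<Sum>a\<in>K. \<Sum>c\<in>L. \<Sum>i\<in>I. \<Sum>j\<in>J. F i j a c)"
    by (rule sum.cong[OF refl], rule sum.swap)
  finally show ?thesis .
qed

definition cext :: "(real^'n \<Rightarrow> real^'n \<Rightarrow> real) \<Rightarrow> complex^'n \<Rightarrow> complex^'n \<Rightarrow> complex" where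
  "cext b v w = (\<Sum>i\<in>UNIV. \<Sum>j\<in>UNIV. v$i * w$j * complex_of_real (b (axis i 1) (axis j 1)))"

lemma cmv: "(cmat A *v v) $ i = (\<Sum>a\<in>UNIV. complex_of_real (A$i$a) * v$a)"
  by (simp add: cmat_def matrix_vector_mult_def)

lemma prod_sums: "(\<Sum>a\<in>I. X a) * (\<Sum>c\<in>J. Y c) * (Z::complex) = (\<Sum>a\<in>I. \<Sum>c\<in>J. X a * Y c * Z)"
  by (simp add: sum_distrib_left sum_distrib_right) (rule sum.swap)

lemma cext_transfer:
  fixes b :: "real^'n \<Rightarrow> real^'n \<Rightarrow> real"
  assumes "bilinear b"
  shows "cext b (cmat A *v v) (cmat C *v w) =
    (\<Sum>a\<in>UNIV. \<Sum>c\<in>UNIV. v$a * w$c * complex_of_real (b (A *v axis a 1) (C *v axis c 1)))"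
proof -
  have e: "b (A *v axis a 1) (C *v axis c 1) = (\<Sum>i\<in>UNIV. \<Sum>j\<in>UNIV. A$i$a * C$j$c * b (axis i 1) (axis j 1))" for a c
    using bil_expand[OF assms, of "A *v axis a 1" "C *v axis c 1"] by (simp add: matrix_vector_mult_basis column_def)
  define F where "F i j a c = (complex_of_real (A$i$a) * v$a) * (complex_of_real (C$j$c) * w$c) * complex_of_real (b (axis i 1) (axis j 1))" for i j a c
  have "cext b (cmat A *v v) (cmat C *v w) = (\<Sum>i\<in>UNIV. \<Sum>j\<in>UNIV. \<Sum>a\<in>UNIV. \<Sum>c\<in>UNIV. F i j a c)"
    unfolding cext_def cmv prod_sums F_def ..
  also have "\<dots> = (\<Sum>a\<in>UNIV. \<Sum>c\<in>UNIV. \<Sum>i\<in>UNIV. \<Sum>j\<in>UNIV. F i j a c)" by (rule sum4_swap)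
  also have "\<dots> = (\<Sum>a\<in>UNIV. \<Sum>c\<in>UNIV. v$a * w$c * complex_of_real (b (A *v axis a 1) (C *v axis c 1)))"
  proof (rule sum.cong[OF refl], rule sum.cong[OF refl])
    fix a c
    have "v$a * w$c * complex_of_real (b (A *v axis a 1) (C *v axis c 1))
       = (\<Sum>i\<in>UNIV. \<Sum>j\<in>UNIV. v$a * w$c * (complex_of_real (A$i$a) * complex_of_real (C$j$c) * complex_of_real (b (axis i 1) (axis j 1))))"
      unfolding e of_real_sum of_real_mult sum_distrib_left ..
    also have "\<dots> = (\<Sum>i\<in>UNIV. \<Sum>j\<in>UNIV. F i j a c)"
      unfolding F_def by (rule sum.cong[OF refl], rule sum.cong[OF refl]) (simp only: mult_ac)
    finally show "(\<Sum>i\<in>UNIV. \<Sum>j\<in>UNIV. F i j a c) = v$a * w$c * complex_of_real (b (A *v axis a 1) (C *v axis c 1))" by (rule sym)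
  qed
  finally show ?thesis .
qed

lemma cmat_id: "cmat (mat 1) *v v = v"
proof -
  have h: "cmat (mat 1) = (mat 1 :: complex^'a^'a)" by (simp add: cmat_def mat_def vec_eq_iff)
  show ?thesis unfolding h by (rule matrix_vector_mul_lid)
qed

lemma cext_scale_r: "cext b v (\<chi> i. m * w$i) = m * cext b v w"
  unfolding cext_def by (simp add: sum_distrib_left mult_ac)

lemma cext_scale_l: "cext b (\<chi> i. m * v$i) w = m * cext b v w"
  unfolding cext_def by (simp add: sum_distrib_left mult_ac)

lemma sym_case:
  fixes b :: "real^'n \<Rightarrow> real^'n \<Rightarrow> real"
  assumes "bilinear b" "\<And>u w. b u (A *v w) = b (A *v u) w"
    and "v \<in> eigenspace_c A l" "w \<in> eigenspace_c A m" "m \<noteq> l"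
  shows "cext b v w = 0"
proof -
  have "cext b (cmat (mat 1) *v v) (cmat A *v w) = cext b (cmat A *v v) (cmat (mat 1) *v w)"
    unfolding cext_transfer[OF assms(1)] by (simp add: matrix_vector_mul_lid assms(2))
  hence "m * cext b v w = l * cext b v w"
    using assms(3,4) by (simp add: cmat_id eigenspace_c_def cext_scale_r cext_scale_l)
  thus ?thesis using assms(5) by simp
qed

lemma orth_case:
  fixes b :: "real^'n \<Rightarrow> real^'n \<Rightarrow> real"
  assumes "bilinear b" "\<And>u w. b (A *v u) (A *v w) = b u w"
    and "v \<in> eigenspace_c A l" "w \<in> eigenspace_c A m"
  shows "l * m * cext b v w = cext b v w"
proof -
  have "cext b (cmat A *v v) (cmat A *v w) = cext b (cmat (mat 1) *v v) (cmat (mat 1) *v w)"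
    unfolding cext_transfer[OF assms(1)] by (simp add: matrix_vector_mul_lid assms(2))
  thus ?thesis
    using assms(3,4) by (simp add: cmat_id eigenspace_c_def cext_scale_r cext_scale_l mult.commute)
qed

lemma cnj_eig:
  assumes "v \<in> eigenspace_c A l"
  shows "(\<chi> i. cnj (v$i)) \<in> eigenspace_c A (cnj l)"
proof -
  have "(cmat A *v v) $ i = l * v$i" for i using assms by (simp add: eigenspace_c_def)
  hence "cnj ((cmat A *v v) $ i) = cnj l * cnj (v$i)" for i by simp
  thus ?thesis
    by (simp add: eigenspace_c_def vec_eq_iff cmat_def matrix_vector_mult_def)
qed

lemma pos_case:
  fixes b :: "real^'n \<Rightarrow> real^'n \<Rightarrow> real"
  assumes "bilinear b" "\<And>u. u \<noteq> 0 \<Longrightarrow> b u u > 0" "v \<noteq> 0"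
  shows "Re (cext b v (\<chi> i. cnj (v$i))) > 0"
proof -
  define a where "a = (\<chi> i. Re (v$i))"
  define c where "c = (\<chi> i. Im (v$i))"
  have ge: "b u u \<ge> 0" for u
  proof (cases "u = 0")
    case True
    have "b 0 0 = 0" using assms(1) by (simp add: bilinear_lzero)
    thus ?thesis using True by simp
  qed (use assms(2) in force)
  have "a \<noteq> 0 \<or> c \<noteq> 0" using assms(3) by (auto simp: a_def c_def vec_eq_iff complex_eq_iff)
  hence pos: "b a a + b c c > 0" using ge assms(2) by (meson add_pos_nonneg add_nonneg_pos)
  have "Re (cext b v (\<chi> i. cnj (v$i))) =
     (\<Sum>i\<in>UNIV. \<Sum>j\<in>UNIV. (a$i * a$j + c$i * c$j) * b (axis i 1) (axis j 1))"
    unfolding cext_def by (simp add: a_def c_def Re_sum)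
  also have "\<dots> = b a a + b c c"
    by (simp add: bil_expand[OF assms(1), of a a] bil_expand[OF assms(1), of c c] algebra_simps sum.distrib)
  finally show ?thesis using pos by simp
qed

lemma proj_exists:
  fixes P :: "(real^'m) set"
  assumes "subspace P"
  shows "\<exists>p. p \<in> P \<and> (\<forall>s\<in>P. (w - p) \<bullet> s = 0)"
proof -
  obtain y z where "y \<in> span P" "\<And>s. s \<in> span P \<Longrightarrow> orthogonal z s" "w = y + z"
    using orthogonal_subspace_decomp_exists[of P w] by metis
  moreover have "span P = P" using assms by (simp add: span_eq_iff)
  ultimately show ?thesis by (intro exI[of _ y]) (auto simp: orthogonal_def)
qed

lemma proj_unique:
  fixes P :: "(real^'m) set"
  assumes "subspace P" "p \<in> P" "\<forall>s\<in>P. (w - p) \<bullet> s = 0" "q \<in> P" "\<forall>s\<in>P. (w - q) \<bullet> s = 0"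
  shows "p = q"
proof -
  have d: "p - q \<in> P" using assms by (simp add: subspace_diff)
  have "(p - q) \<bullet> (p - q) = (w - q) \<bullet> (p - q) - (w - p) \<bullet> (p - q)" by (simp add: algebra_simps)
  also have "\<dots> = 0" using assms d by simp
  finally show ?thesis by simp
qed

lemma nproj_char:
  fixes P :: "(real^'m) set"
  assumes "subspace P" "p \<in> P" "\<forall>s\<in>P. (w - p) \<bullet> s = 0"
  shows "nproj P w = w - p"
proof -
  have "(THE p. p \<in> P \<and> (\<forall>s\<in>P. (w - p) \<bullet> s = 0)) = p"
    using assms proj_unique[OF assms(1)] by (intro the_equality) auto
  thus ?thesis by (simp add: nproj_def)
qed

lemma nproj_shift:
  fixes P :: "(real^'m) set"
  assumes "subspace P" "t \<in> P"
  shows "nproj P (c *\<^sub>R w + t) = c *\<^sub>R nproj P w"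
proof -
  obtain p where p: "p \<in> P" "\<forall>s\<in>P. (w - p) \<bullet> s = 0" using proj_exists[OF assms(1)] by blast
  have "nproj P (c *\<^sub>R w + t) = (c *\<^sub>R w + t) - (c *\<^sub>R p + t)"
  proof (rule nproj_char[OF assms(1)])
    show "c *\<^sub>R p + t \<in> P" using p assms by (simp add: subspace_add subspace_scale)
    show "\<forall>s\<in>P. (c *\<^sub>R w + t - (c *\<^sub>R p + t)) \<bullet> s = 0"
    proof
      fix s assume "s \<in> P"
      have "(c *\<^sub>R w + t - (c *\<^sub>R p + t)) = c *\<^sub>R (w - p)" by (simp add: algebra_simps)
      thus "(c *\<^sub>R w + t - (c *\<^sub>R p + t)) \<bullet> s = 0" using p \<open>s \<in> P\<close> by simp
    qed
  qed
  also have "\<dots> = c *\<^sub>R (w - p)" by (simp add: algebra_simps)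
  also have "\<dots> = c *\<^sub>R nproj P w" using nproj_char[OF assms(1) p] by simp
  finally show ?thesis .
qed

lemma nproj_linear:
  fixes P :: "(real^'m) set"
  assumes "subspace P"
  shows "linear (nproj P)"
proof (rule linearI)
  fix x y :: "real^'m"
  obtain p where p: "p \<in> P" "\<forall>s\<in>P. (x - p) \<bullet> s = 0" using proj_exists[OF assms(1)] by blast
  obtain q where q: "q \<in> P" "\<forall>s\<in>P. (y - q) \<bullet> s = 0" using proj_exists[OF assms(1)] by blast
  have "nproj P (x + y) = (x + y) - (p + q)"
  proof (rule nproj_char[OF assms(1)])
    show "p + q \<in> P" using p q assms by (simp add: subspace_add)
    show "\<forall>s\<in>P. (x + y - (p + q)) \<bullet> s = 0"
    proof
      fix s assume "s \<in> P"
      have "(x + y - (p + q)) = (x - p) + (y - q)" by (simp add: algebra_simps)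
      thus "(x + y - (p + q)) \<bullet> s = 0" using p q \<open>s \<in> P\<close> by (simp only: inner_add_left)
    qed
  qed
  moreover have "nproj P x = x - p" using nproj_char[OF assms(1) p] .
  moreover have "nproj P y = y - q" using nproj_char[OF assms(1) q] .
  ultimately show "nproj P (x + y) = nproj P x + nproj P y" by (simp only:) (simp add: algebra_simps)
next
  fix c :: real and x :: "real^'m"
  show "nproj P (c *\<^sub>R x) = c *\<^sub>R nproj P x"
    using nproj_shift[OF assms subspace_0[OF assms], of c x] by simp
qed

lemma line_deriv:
  fixes g :: "'a::real_normed_vector \<Rightarrow> real"
  assumes "(g has_derivative G) (at (a + s *\<^sub>R u))"
  shows "((\<lambda>s. g (a + s *\<^sub>R u)) has_real_derivative G u) (at s)"
proof -
  have l: "linear G" using assms has_derivative_linear by blast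
  have i: "((\<lambda>s. a + s *\<^sub>R u) has_derivative (\<lambda>h. h *\<^sub>R u)) (at s)"
    by (auto intro!: derivative_eq_intros)
  have "((\<lambda>s. g (a + s *\<^sub>R u)) has_derivative (\<lambda>h. G (h *\<^sub>R u))) (at s)"
    using has_derivative_compose[OF i assms] by simp
  moreover have "(\<lambda>h. G (h *\<^sub>R u)) = (*) (G u)"
    using linear_scale[OF l] by (auto simp: fun_eq_iff mult.commute)
  ultimately show ?thesis by (simp add: has_field_derivative_def)
qed

lemma sym_est:
  fixes g :: "'a::real_normed_vector \<Rightarrow> real"
  assumes ball: "ball x r \<subseteq> S"
    and der: "\<And>y. y \<in> S \<Longrightarrow> (g has_derivative G y) (at y)"
    and lin: "linear Lu"
    and appr: "\<forall>y. norm (y - x) < d \<longrightarrow> \<bar>G y u - G x u - Lu (y - x)\<bar> \<le> e * norm (y - x)"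
    and t: "t > 0" "t * (norm u + norm v) < d" "t * (norm u + norm v) < r" and e: "e \<ge> 0"
  shows "\<bar>g (x + t *\<^sub>R u + t *\<^sub>R v) - g (x + t *\<^sub>R v) - g (x + t *\<^sub>R u) + g x - t * t * Lu v\<bar>
          \<le> e * t * t * (2 * norm u + norm v)"
proof -
  define \<psi> where "\<psi> s = g ((x + t *\<^sub>R v) + s *\<^sub>R u) - g (x + s *\<^sub>R u)" for s
  define \<psi>' where "\<psi>' s = G ((x + t *\<^sub>R v) + s *\<^sub>R u) u - G (x + s *\<^sub>R u) u" for s
  have inS: "x + t *\<^sub>R v + s *\<^sub>R u \<in> S" "x + s *\<^sub>R u \<in> S" if "0 \<le> s" "s \<le> t" for s
  proof -
    have "norm (t *\<^sub>R v + s *\<^sub>R u) \<le> norm (t *\<^sub>R v) + norm (s *\<^sub>R u)" by (rule norm_triangle_ineq)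
    also have "\<dots> = t * norm v + s * norm u" using that t by simp
    also have "\<dots> \<le> t * (norm u + norm v)" using that by (simp add: algebra_simps mult_right_mono)
    finally have "norm (t *\<^sub>R v + s *\<^sub>R u) < r" using t by simp
    hence "x + (t *\<^sub>R v + s *\<^sub>R u) \<in> ball x r"
      by (simp add: dist_norm) (metis minus_add_distrib norm_minus_cancel diff_conv_add_uminus)
    thus "x + t *\<^sub>R v + s *\<^sub>R u \<in> S" using ball by (auto simp: add.assoc)
    have "norm (s *\<^sub>R u) = s * norm u" using that by simp
    also have "\<dots> \<le> t * norm u" using that by (simp add: mult_right_mono)
    also have "\<dots> \<le> t * (norm u + norm v)" using t by simp
    finally have "norm (s *\<^sub>R u) \<le> t * (norm u + norm v)" .
    hence "norm (s *\<^sub>R u) < r" using t by simp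
    thus "x + s *\<^sub>R u \<in> S" using ball by (auto simp: dist_norm)
  qed
  have "\<exists>z>0. z < t \<and> \<psi> t - \<psi> 0 = (t - 0) * \<psi>' z"
  proof (rule MVT2)
    fix s :: real assume "0 \<le> s" "s \<le> t"
    show "(\<psi> has_real_derivative \<psi>' s) (at s)"
      unfolding \<psi>_def \<psi>'_def
      by (intro DERIV_diff line_deriv der inS \<open>0 \<le> s\<close> \<open>s \<le> t\<close>)
  qed (use t in auto)
  then obtain z where z: "0 < z" "z < t" "\<psi> t - \<psi> 0 = t * \<psi>' z" by auto
  define p where "p = x + t *\<^sub>R v + z *\<^sub>R u"
  define q where "q = x + z *\<^sub>R u"
  have np: "norm (p - x) \<le> t * (norm u + norm v)"
  proof -
    have "p - x = t *\<^sub>R v + z *\<^sub>R u" unfolding p_def by simp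
    hence "norm (p - x) \<le> norm (t *\<^sub>R v) + norm (z *\<^sub>R u)" by (simp only: norm_triangle_ineq)
    also have "\<dots> = t * norm v + z * norm u" using t z by simp
    also have "\<dots> \<le> t * (norm u + norm v)" using z by (simp add: algebra_simps mult_right_mono)
    finally show ?thesis .
  qed
  have nq: "norm (q - x) \<le> t * norm u" unfolding q_def using z by (simp add: mult_right_mono)
  have nq2: "t * norm u \<le> t * (norm u + norm v)" using t by simp
  have "norm (p - x) < d" using np t by linarith
  hence ep: "\<bar>G p u - G x u - Lu (p - x)\<bar> \<le> e * norm (p - x)" using appr by blast
  have "norm (q - x) < d" using nq nq2 t by linarith
  hence eq: "\<bar>G q u - G x u - Lu (q - x)\<bar> \<le> e * norm (q - x)" using appr by blast
  have "Lu (p - x) - Lu (q - x) = Lu (t *\<^sub>R v)"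
    unfolding p_def q_def by (simp add: linear_diff[OF lin, symmetric] algebra_simps)
  also have "\<dots> = t * Lu v" using linear_scale[OF lin] by simp
  finally have Ld: "Lu (p - x) - Lu (q - x) = t * Lu v" .
  have "\<psi>' z - t * Lu v = (G p u - G x u - Lu (p - x)) - (G q u - G x u - Lu (q - x))"
    using Ld unfolding \<psi>'_def p_def q_def by (simp add: algebra_simps)
  hence "\<bar>\<psi>' z - t * Lu v\<bar> \<le> e * norm (p - x) + e * norm (q - x)" using ep eq by linarith
  also have "\<dots> \<le> e * (t * (norm u + norm v)) + e * (t * norm u)"
    using np nq e by (intro add_mono mult_left_mono) auto
  finally have b: "\<bar>\<psi>' z - t * Lu v\<bar> \<le> e * t * (2 * norm u + norm v)" by (simp add: algebra_simps)
  have "g (x + t *\<^sub>R u + t *\<^sub>R v) - g (x + t *\<^sub>R v) - g (x + t *\<^sub>R u) + g x - t * t * Lu v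
        = t * (\<psi>' z - t * Lu v)"
    using z(3) unfolding \<psi>_def by (simp add: algebra_simps)
  also have "\<bar>\<dots>\<bar> \<le> t * (e * t * (2 * norm u + norm v))"
    using b t by (simp add: abs_mult mult_left_mono)
  finally show ?thesis by (simp add: algebra_simps)
qed

lemma sym2:
  fixes g :: "'a::real_normed_vector \<Rightarrow> real"
  assumes S: "open S" "x \<in> S" and der: "\<And>y. y \<in> S \<Longrightarrow> (g has_derivative G y) (at y)"
    and du: "((\<lambda>y. G y u) has_derivative Lu) (at x)" and dv: "((\<lambda>y. G y v) has_derivative Lv) (at x)"
  shows "Lu v = Lv u"
proof (rule ccontr)
  assume ne: "Lu v \<noteq> Lv u"
  define K where "K = 2 * norm u + 2 * norm v + 1"
  define e where "e = \<bar>Lu v - Lv u\<bar> / (4 * K)"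
  have K: "K > 0" unfolding K_def by (simp add: add_nonneg_pos)
  have e: "e > 0" unfolding e_def using ne K by simp
  obtain r where r: "r > 0" "ball x r \<subseteq> S" using S by (meson openE)
  have lu: "linear Lu" using du has_derivative_linear by blast
  have lv: "linear Lv" using dv has_derivative_linear by blast
  obtain d1 where d1: "d1 > 0" "\<forall>y. norm (y - x) < d1 \<longrightarrow> norm (G y u - G x u - Lu (y - x)) \<le> e * norm (y - x)"
    using du e unfolding has_derivative_at_alt by blast
  obtain d2 where d2: "d2 > 0" "\<forall>y. norm (y - x) < d2 \<longrightarrow> norm (G y v - G x v - Lv (y - x)) \<le> e * norm (y - x)"
    using dv e unfolding has_derivative_at_alt by blast
  define m where "m = min r (min d1 d2)"
  have m: "m > 0" unfolding m_def using r d1 d2 by simp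
  define t where "t = m / (norm u + norm v + 1)"
  have t: "t > 0" unfolding t_def using m by (simp add: add_nonneg_pos)
  have "t * (norm u + norm v) < t * (norm u + norm v + 1)" using t by simp
  also have "\<dots> = m"
  proof -
    have "norm u + norm v + 1 > 0" by (simp add: add_nonneg_pos)
    thus ?thesis unfolding t_def by simp
  qed
  finally have tm: "t * (norm u + norm v) < m" .
  have tm': "t * (norm v + norm u) < m" using tm by (simp add: add.commute)
  have e1: "\<bar>g (x + t *\<^sub>R u + t *\<^sub>R v) - g (x + t *\<^sub>R v) - g (x + t *\<^sub>R u) + g x - t * t * Lu v\<bar>
          \<le> e * t * t * (2 * norm u + norm v)"
    by (rule sym_est[OF r(2) der lu _ t, of d1]) (use d1 tm m_def e in auto)
  have e2: "\<bar>g (x + t *\<^sub>R v + t *\<^sub>R u) - g (x + t *\<^sub>R u) - g (x + t *\<^sub>R v) + g x - t * t * Lv u\<bar>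
          \<le> e * t * t * (2 * norm v + norm u)"
    by (rule sym_est[OF r(2) der lv _ t, of d2]) (use d2 tm' m_def e in auto)
  have "x + t *\<^sub>R v + t *\<^sub>R u = x + t *\<^sub>R u + t *\<^sub>R v" by (simp add: algebra_simps)
  hence e2': "\<bar>g (x + t *\<^sub>R u + t *\<^sub>R v) - g (x + t *\<^sub>R v) - g (x + t *\<^sub>R u) + g x - t * t * Lv u\<bar>
          \<le> e * t * t * (2 * norm v + norm u)" using e2 by (simp add: algebra_simps)
  define D where "D = g (x + t *\<^sub>R u + t *\<^sub>R v) - g (x + t *\<^sub>R v) - g (x + t *\<^sub>R u) + g x"
  have "t * t * \<bar>Lu v - Lv u\<bar> = \<bar>(D - t * t * Lv u) - (D - t * t * Lu v)\<bar>"
  proof -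
    have "(D - t * t * Lv u) - (D - t * t * Lu v) = (t * t) * (Lu v - Lv u)" by (simp add: algebra_simps)
    thus ?thesis using t by (simp add: abs_mult)
  qed
  also have "\<dots> \<le> \<bar>D - t * t * Lv u\<bar> + \<bar>D - t * t * Lu v\<bar>" by (rule abs_triangle_ineq4)
  finally have "t * t * \<bar>Lu v - Lv u\<bar> \<le> e * t * t * (2 * norm u + norm v) + e * t * t * (2 * norm v + norm u)"
    using e1 e2' unfolding D_def by linarith
  also have "\<dots> = t * t * (e * (3 * norm u + 3 * norm v))" by (simp add: algebra_simps)
  finally have "\<bar>Lu v - Lv u\<bar> \<le> e * (3 * norm u + 3 * norm v)" using t by simp
  also have "\<dots> \<le> e * (2 * K)" using e unfolding K_def by (intro mult_left_mono) auto
  also have "\<dots> = \<bar>Lu v - Lv u\<bar> / 2" unfolding e_def using K by simp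
  finally show False using ne by simp
qed

lemma smooth_der0:
  assumes "smooth_on U F" "y \<in> U"
  shows "(F has_derivative Dif F y) (at y)"
proof -
  have "iter_dd F [] differentiable (at y)" using assms unfolding smooth_on_def by blast
  thus ?thesis by (simp add: frechet_derivative_works[symmetric])
qed

lemma smooth_der1:
  fixes F :: "real^'n \<Rightarrow> real^'m"
  assumes "smooth_on U F" "y \<in> U"
  shows "((\<lambda>z. Dif F z w) has_derivative (\<lambda>h. D2 F y h w)) (at y)"
proof -
  have "iter_dd F [w] differentiable (at y)" using assms unfolding smooth_on_def by blast
  thus ?thesis unfolding D2_def by (simp add: frechet_derivative_works[symmetric])
qed

lemma D2_sym:
  fixes F :: "real^'n \<Rightarrow> real^'m"
  assumes "open U" "smooth_on U F" "y \<in> U"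
  shows "D2 F y u v = D2 F y v u"
proof -
  have "D2 F y u v $ k = D2 F y v u $ k" for k
  proof -
  have bl: "bounded_linear (\<lambda>z::real^'m. z $ k)" by (rule bounded_linear_vec_nth)
  have "(\<lambda>h. D2 F y h u $ k) v = (\<lambda>h. D2 F y h v $ k) u"
  proof (rule sym2[OF assms(1,3), where g = "\<lambda>z. F z $ k" and G = "\<lambda>z w. Dif F z w $ k"
     and Lu = "\<lambda>h. D2 F y h u $ k" and Lv = "\<lambda>h. D2 F y h v $ k"])
    show "((\<lambda>z. F z $ k) has_derivative (\<lambda>w. Dif F z w $ k)) (at z)" if "z \<in> U" for z
      using bounded_linear.has_derivative[OF bl smooth_der0[OF assms(2) that]] by simp
    show "((\<lambda>z. Dif F z u $ k) has_derivative (\<lambda>h. D2 F y h u $ k)) (at y)"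
      using bounded_linear.has_derivative[OF bl smooth_der1[OF assms(2,3)]] by simp
    show "((\<lambda>z. Dif F z v $ k) has_derivative (\<lambda>h. D2 F y h v $ k)) (at y)"
      using bounded_linear.has_derivative[OF bl smooth_der1[OF assms(2,3)]] by simp
  qed
  thus "D2 F y u v $ k = D2 F y v u $ k" by simp
  qed
  thus ?thesis by (simp add: vec_eq_iff)
qed

lemma D2_lin1:
  fixes F :: "real^'n \<Rightarrow> real^'m"
  assumes "smooth_on U F" "y \<in> U"
  shows "linear (\<lambda>h. D2 F y h w)"
  using has_derivative_linear[OF smooth_der1[OF assms]] .

lemma D2_lin2:
  fixes F :: "real^'n \<Rightarrow> real^'m"
  assumes "open U" "smooth_on U F" "y \<in> U"
  shows "linear (D2 F y h)"
proof -
  have "D2 F y h = (\<lambda>w. D2 F y w h)" using D2_sym[OF assms] by auto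
  thus ?thesis using D2_lin1[OF assms(2,3)] by simp
qed

lemma linear_mv_nth: "linear (\<lambda>M::real^'n^'n. (M *v v) $ i)"
  by (rule linearI) (simp_all add: matrix_vector_mult_def sum.distrib sum_distrib_left algebra_simps)

lemma metric_bilinear:
  assumes "linear (Dif f x)"
  shows "bilinear (metric f x)"
  unfolding bilinear_def metric_def
  by (auto intro!: linearI simp: linear_add[OF assms] linear_scale[OF assms] inner_add_left inner_add_right)

lemma main_g:
  fixes f g :: "real^'n \<Rightarrow> real^'m"
    and \<phi> :: "real^'n \<Rightarrow> real"
    and T :: "real^'n \<Rightarrow> real^'n^'n"
  assumes U: "open U" and sf: "smooth_on U f" and sg: "smooth_on U g"
    and sp: "smooth_on U \<phi>" and sT: "smooth_on U T"
    and rel: "\<forall>x\<in>U. \<forall>v. Dif g x v = exp (\<phi> x) *\<^sub>R Dif f x (T x *v v)"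
    and x: "x \<in> U"
  shows "\<exists>t\<in>range (Dif f x). D2 g x h v = exp (\<phi> x) *\<^sub>R D2 f x h (T x *v v) + t"
proof -
  define a where "a i y = exp (\<phi> y) * (T y *v v) $ i" for i y
  have lin: "linear (Dif f y)" if "y \<in> U" for y
    using has_derivative_linear[OF smooth_der0[OF sf that]] .
  have ad: "\<exists>a'. ((a i) has_derivative a') (at x)" for i
  proof -
    have e: "((\<lambda>y. exp (\<phi> y)) has_derivative (\<lambda>h. Dif \<phi> x h * exp (\<phi> x))) (at x)"
      by (rule has_derivative_exp[OF smooth_der0[OF sp x]])
    have bl: "bounded_linear (\<lambda>M::real^'n^'n. (M *v v) $ i)"
      using linear_mv_nth linear_conv_bounded_linear by blast
    have c: "((\<lambda>y. (T y *v v) $ i) has_derivative (\<lambda>h. (Dif T x h *v v) $ i)) (at x)"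
      using bounded_linear.has_derivative[OF bl smooth_der0[OF sT x]] .
    show ?thesis unfolding a_def using has_derivative_mult[OF e c] by blast
  qed
  then obtain a' where a': "\<And>i. ((a i) has_derivative a' i) (at x)" by metis
  define H where "H y = (\<Sum>i\<in>UNIV. a i y *\<^sub>R Dif f y (axis i 1))" for y
  have HD: "(H has_derivative (\<lambda>h. \<Sum>i\<in>UNIV. a i x *\<^sub>R D2 f x h (axis i 1) + a' i h *\<^sub>R Dif f x (axis i 1))) (at x)"
    unfolding H_def
    by (intro has_derivative_sum has_derivative_scaleR a' smooth_der1[OF sf x])
  have eqH: "Dif g y v = H y" if "y \<in> U" for y
  proof -
    have "Dif g y v = exp (\<phi> y) *\<^sub>R Dif f y (T y *v v)" using rel that by blast
    also have "\<dots> = exp (\<phi> y) *\<^sub>R (\<Sum>i\<in>UNIV. (T y *v v) $ i *\<^sub>R Dif f y (axis i 1))"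
      using lin_expand[OF lin[OF that]] by metis
    also have "\<dots> = H y" unfolding H_def a_def by (simp add: scaleR_sum_right)
    finally show ?thesis .
  qed
  have "((\<lambda>y. Dif g y v) has_derivative (\<lambda>h. \<Sum>i\<in>UNIV. a i x *\<^sub>R D2 f x h (axis i 1) + a' i h *\<^sub>R Dif f x (axis i 1))) (at x)"
    by (rule has_derivative_transform_within_open[OF HD U x]) (simp add: eqH)
  hence "(\<lambda>h. D2 g x h v) = (\<lambda>h. \<Sum>i\<in>UNIV. a i x *\<^sub>R D2 f x h (axis i 1) + a' i h *\<^sub>R Dif f x (axis i 1))"
    using has_derivative_unique smooth_der1[OF sg x] by blast
  hence "D2 g x h v = (\<Sum>i\<in>UNIV. a i x *\<^sub>R D2 f x h (axis i 1)) + (\<Sum>i\<in>UNIV. a' i h *\<^sub>R Dif f x (axis i 1))"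
    by (simp add: fun_eq_iff sum.distrib)
  also have "(\<Sum>i\<in>UNIV. a i x *\<^sub>R D2 f x h (axis i 1)) = exp (\<phi> x) *\<^sub>R D2 f x h (T x *v v)"
    using lin_expand[OF D2_lin2[OF U sf x], of h "T x *v v"]
    by (simp add: a_def scaleR_sum_right)
  finally have "D2 g x h v = exp (\<phi> x) *\<^sub>R D2 f x h (T x *v v) + (\<Sum>i\<in>UNIV. a' i h *\<^sub>R Dif f x (axis i 1))" .
  moreover have "(\<Sum>i\<in>UNIV. a' i h *\<^sub>R Dif f x (axis i 1)) \<in> range (Dif f x)"
  proof -
    have "(\<Sum>i\<in>UNIV. a' i h *\<^sub>R Dif f x (axis i 1)) = Dif f x (\<Sum>i\<in>UNIV. a' i h *\<^sub>R axis i 1)"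
      by (simp add: linear_sum[OF lin[OF x]] linear_scale[OF lin[OF x]])
    thus ?thesis by simp
  qed
  ultimately show ?thesis by blast
qed

theorem lemma3p2:
  fixes f g :: "real^'n \<Rightarrow> real^'m"
    and \<phi> :: "real^'n \<Rightarrow> real"
    and T :: "real^'n \<Rightarrow> real^'n^'n"
    and l m :: complex
    and U :: "(real^'n) set"
  assumes "immersion_on f U" and "immersion_on g U"
    and "smooth_on U \<phi>" and "smooth_on U T"
    and "\<forall>x\<in>U. \<forall>u v. metric f x (T x *v u) (T x *v v) = metric f x u v"
    and "\<forall>x\<in>U. \<forall>v. Dif g x v = exp (\<phi> x) *\<^sub>R Dif f x (T x *v v)"
    and "x \<in> U"
    and "\<exists>v. v \<noteq> 0 \<and> v \<in> eigenspace_c (T x) l"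
    and "\<exists>w. w \<noteq> 0 \<and> w \<in> eigenspace_c (T x) m"
  shows "(\<not> (m = cnj l \<and> m = 1 / l) \<longrightarrow>
           (\<forall>v\<in>eigenspace_c (T x) l. \<forall>w\<in>eigenspace_c (T x) m. cmetric f x v w = 0))
       \<and> (m \<noteq> l \<longrightarrow>
           (\<forall>v\<in>eigenspace_c (T x) l. \<forall>w\<in>eigenspace_c (T x) m. csff f x v w = 0))"
proof -
  have U: "open U" and sf: "smooth_on U f" and inj: "inj (Dif f x)"
    using assms(1,7) unfolding immersion_on_def by auto
  have sg: "smooth_on U g" using assms(2) unfolding immersion_on_def by auto
  have x: "x \<in> U" by fact
  have lin: "linear (Dif f x)" using has_derivative_linear[OF smooth_der0[OF sf x]] .
  have mb: "bilinear (metric f x)" by (rule metric_bilinear[OF lin])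
  have cm: "cmetric f x v w = cext (metric f x) v w" for v w
    unfolding cmetric_def cext_def ..
  have orth: "metric f x (T x *v u) (T x *v w) = metric f x u w" for u w using assms(5) x by blast
  have pos: "metric f x u u > 0" if "u \<noteq> 0" for u
  proof -
    have "Dif f x u \<noteq> 0" using inj that linear_0[OF lin] by (metis injD)
    thus ?thesis unfolding metric_def by simp
  qed
  have part1: "cmetric f x v w = 0" if nc: "\<not> (m = cnj l \<and> m = 1 / l)"
     and v: "v \<in> eigenspace_c (T x) l" and w: "w \<in> eigenspace_c (T x) m" for v w
  proof (rule ccontr)
    assume ne: "cmetric f x v w \<noteq> 0"
    have "l * m * cext (metric f x) v w = cext (metric f x) v w" by (rule orth_case[OF mb orth v w])
    hence lm: "l * m = 1" using ne cm by (metis mult_cancel_right1)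
    obtain v0 where v0: "v0 \<noteq> 0" "v0 \<in> eigenspace_c (T x) l" using assms(8) by blast
    have c0: "l * cnj l * cext (metric f x) v0 (\<chi> i. cnj (v0$i)) = cext (metric f x) v0 (\<chi> i. cnj (v0$i))"
      by (rule orth_case[OF mb orth v0(2) cnj_eig[OF v0(2)]])
    have "Re (cext (metric f x) v0 (\<chi> i. cnj (v0$i))) > 0" by (rule pos_case[OF mb pos v0(1)])
    hence "cext (metric f x) v0 (\<chi> i. cnj (v0$i)) \<noteq> 0" by auto
    hence ll: "l * cnj l = 1" using c0 by (metis mult_cancel_right1)
    have "m = m * (l * cnj l)" using ll by simp
    also have "\<dots> = (l * m) * cnj l" by (simp add: mult_ac)
    finally have m1: "m = cnj l" using lm by simp
    have "l \<noteq> 0" using lm by auto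
    hence "m = 1 / l" using lm by (simp add: field_simps mult.commute)
    thus False using nc m1 by simp
  qed
  define P where "P = range (Dif f x)"
  have P: "subspace P" unfolding P_def by (rule linear_subspace_image[OF lin subspace_UNIV])
  have sffsym: "sff f x u (T x *v w) = sff f x (T x *v u) w" for u w
  proof -
    obtain t1 where t1: "t1 \<in> P" "D2 g x u w = exp (\<phi> x) *\<^sub>R D2 f x u (T x *v w) + t1"
      using main_g[OF U sf sg assms(3,4,6) x, of u w] unfolding P_def by blast
    obtain t2 where t2: "t2 \<in> P" "D2 g x w u = exp (\<phi> x) *\<^sub>R D2 f x w (T x *v u) + t2"
      using main_g[OF U sf sg assms(3,4,6) x, of w u] unfolding P_def by blast
    have "exp (\<phi> x) *\<^sub>R sff f x u (T x *v w) = nproj P (D2 g x u w)"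
      unfolding t1(2) sff_def P_def[symmetric] using nproj_shift[OF P t1(1)] by simp
    also have "\<dots> = nproj P (D2 g x w u)" using D2_sym[OF U sg x] by simp
    also have "\<dots> = exp (\<phi> x) *\<^sub>R sff f x w (T x *v u)"
      unfolding t2(2) sff_def P_def[symmetric] using nproj_shift[OF P t2(1)] by simp
    finally have "sff f x u (T x *v w) = sff f x w (T x *v u)" by simp
    also have "\<dots> = sff f x (T x *v u) w" unfolding sff_def using D2_sym[OF U sf x] by simp
    finally show ?thesis .
  qed
  have bk: "bilinear (\<lambda>a c. sff f x a c $ k)" for k
  proof -
    have nl: "linear (\<lambda>z. nproj P z $ k)"
      using linear_compose[OF nproj_linear[OF P] bounded_linear_vec_nth[THEN bounded_linear.linear]]
      by (simp add: o_def)
    have "linear (\<lambda>a. nproj P (D2 f x a c) $ k)" for c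
      using linear_compose[OF D2_lin1[OF sf x] nl] by (simp add: o_def)
    moreover have "linear (\<lambda>c. nproj P (D2 f x a c) $ k)" for a
      using linear_compose[OF D2_lin2[OF U sf x] nl] by (simp add: o_def)
    ultimately show ?thesis unfolding bilinear_def sff_def P_def by simp
  qed
  have part2: "csff f x v w = 0" if ml: "m \<noteq> l"
     and v: "v \<in> eigenspace_c (T x) l" and w: "w \<in> eigenspace_c (T x) m" for v w
  proof -
    have "csff f x v w $ k = 0" for k
    proof -
      have "csff f x v w $ k = cext (\<lambda>a c. sff f x a c $ k) v w" unfolding csff_def cext_def by simp
      also have "\<dots> = 0" by (rule sym_case[OF bk _ v w ml]) (simp add: sffsym)
      finally show ?thesis .
    qed
    thus ?thesis by (simp add: vec_eq_iff)
  qed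
  show ?thesis using part1 part2 by blast
qed

end
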